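(* Let $\mathcal{S}_0$ and $\mathcal{S}_1$ be two MSyDSs with common node set $V$ such that every local function is a threshold function and every master function is \texttt{AND}. Let $\nu$ be the largest negative threshold value occurring among the local functions of $\mathcal{S}_0$ and $\mathcal{S}_1$. Then $\mathcal{S}_0$ and $\mathcal{S}_1$ are inequivalent if and only if there is an inequivalence witness for $\mathcal{S}_0$ and $\mathcal{S}_1$ in which at most $\nu$ nodes have state 0.
   Context: A multilayer synchronous dynamical system (MSyDS) $\mathcal{S}$ over $\mathbb{B}=\{0,1\}$ with $k\ge 1$ layers consists of: a finite node set $V$; undirected simple graphs $G_i=(V,E_i)$, $1\le i\le k$ (all layers share the node set $V$); for each layer $i$ and node $v$ a local function $f_{i,v}$ with output in $\mathbb{B}$ whose inputs are the states of the nodes in the closed neighborhood of $v$ in $G_i$ ($v$ and its neighbors in $G_i$); and for each node $v$ a master function $\psi_v:\mathbb{B}^k\to\mathbb{B}$. A configuration is a map $\mathcal{C}:V\to\mathbb{B}$; its successor is $\mathcal{C}'$ with $\mathcal{C}'(v)=\psi_v(f_{1,v}(\mathcal{C}),\dots,f_{k,v}(\mathcal{C}))$ for all $v$ (synchronous update), where $f_{i,v}(\mathcal{C})$ is $f_{i,v}$ evaluated on the states in $\mathcal{C}$ of the closed neighborhood of $v$ in $G_i$. For an integer $t\ge 0$, the $t$-threshold function equals 1 iff at least $t$ of its inputs equal 1. If the local function of node $v$ in layer $i$ is the $t$-threshold function and $v$ has degree $\delta$ in $G_i$, its negative threshold is $\delta - t + 2$ (the number of 0's among its $\delta+1$ inputs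 that makes it equal 0). \texttt{AND} is 1 iff all inputs are 1. Two MSyDSs on the same node set are equivalent if every configuration has the same successor under both, and inequivalent otherwise. An inequivalence witness is a configuration of $V$ whose successors under the two systems differ. *)

theory Defs
  imports Main
begin

text \<open>A threshold/AND multilayer synchronous dynamical system over node set V is
  represented as a list of layers; each layer is a pair (E, t) consisting of an
  edge relation E of an undirected simple graph on V and a threshold assignment
  t v (the t-threshold local function of node v in that layer).\<close>

type_synonym 'a layer = "('a \<Rightarrow> 'a \<Rightarrow> bool) \<times> ('a \<Rightarrow> nat)"

definition simple_graph_on :: "'a set \<Rightarrow> ('a \<Rightarrow> 'a \<Rightarrow> bool) \<Rightarrow> bool" where
  "simple_graph_on V E \<longleftrightarrow>
     (\<forall>u v. E u v \<longrightarrow> E v u) \<and> (\<forall>v. \<not> E v v) \<and> (\<forall>u v. E u v \<longrightarrow> u \<in> V \<and> v \<in> V)"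

definition thr_msyds :: "'a set \<Rightarrow> 'a layer list \<Rightarrow> bool" where
  "thr_msyds V S \<longleftrightarrow> finite V \<and> S \<noteq> [] \<and> (\<forall>(E, t) \<in> set S. simple_graph_on V E)"

definition closed_nbhd :: "'a set \<Rightarrow> ('a \<Rightarrow> 'a \<Rightarrow> bool) \<Rightarrow> 'a \<Rightarrow> 'a set" where
  "closed_nbhd V E v = {u \<in> V. u = v \<or> E v u}"

definition degree :: "'a set \<Rightarrow> ('a \<Rightarrow> 'a \<Rightarrow> bool) \<Rightarrow> 'a \<Rightarrow> nat" where
  "degree V E v = card {u \<in> V. E v u}"

definition threshold_local :: "'a set \<Rightarrow> 'a layer \<Rightarrow> ('a \<Rightarrow> bool) \<Rightarrow> 'a \<Rightarrow> bool" where
  "threshold_local V L C v = (card {u \<in> closed_nbhd V (fst L) v. C u} \<ge> snd L v)"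

definition successor :: "'a set \<Rightarrow> 'a layer list \<Rightarrow> ('a \<Rightarrow> bool) \<Rightarrow> 'a \<Rightarrow> bool" where
  "successor V S C v = (\<forall>L \<in> set S. threshold_local V L C v)"

text \<open>Configurations are maps V \<Rightarrow> bool; values outside V are irrelevant.\<close>
definition equivalent :: "'a set \<Rightarrow> 'a layer list \<Rightarrow> 'a layer list \<Rightarrow> bool" where
  "equivalent V S0 S1 \<longleftrightarrow> (\<forall>C. \<forall>v \<in> V. successor V S0 C v = successor V S1 C v)"

definition inequivalence_witness :: "'a set \<Rightarrow> 'a layer list \<Rightarrow> 'a layer list \<Rightarrow> ('a \<Rightarrow> bool) \<Rightarrow> bool" where
  "inequivalence_witness V S0 S1 C \<longleftrightarrow> (\<exists>v \<in> V. successor V S0 C v \<noteq> successor V S1 C v)"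

definition neg_threshold :: "'a set \<Rightarrow> 'a layer \<Rightarrow> 'a \<Rightarrow> int" where
  "neg_threshold V L v = int (degree V (fst L) v) - int (snd L v) + 2"

definition max_neg_threshold :: "'a set \<Rightarrow> 'a layer list \<Rightarrow> 'a layer list \<Rightarrow> int" where
  "max_neg_threshold V S0 S1 = Max {neg_threshold V L v | L v. L \<in> set S0 \<union> set S1 \<and> v \<in> V}"

definition num_zeros :: "'a set \<Rightarrow> ('a \<Rightarrow> bool) \<Rightarrow> nat" where
  "num_zeros V C = card {v \<in> V. \<not> C v}"

end

theory Submission
  imports Defs
begin

lemma card_cn:
  assumes "finite V" "simple_graph_on V E" "v \<in> V"
  shows "card (closed_nbhd V E v) = degree V E v + 1"
proof -
  have "closed_nbhd V E v = insert v {u \<in> V. E v u}"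
    using assms unfolding closed_nbhd_def by auto
  moreover have "v \<notin> {u \<in> V. E v u}" using assms(2) unfolding simple_graph_on_def by auto
  moreover have "finite {u \<in> V. E v u}" using assms(1) by auto
  ultimately show ?thesis unfolding degree_def by simp
qed

lemma key:
  assumes fV: "finite V" and gA: "\<forall>(E, t) \<in> set A. simple_graph_on V E" and "A \<noteq> []"
    and gB: "\<forall>(E, t) \<in> set B. simple_graph_on V E"
    and vV: "v \<in> V" and sA: "successor V A C v" and sB: "\<not> successor V B C v"
  shows "\<exists>C' L L0. successor V A C' v \<and> \<not> successor V B C' v \<and> L \<in> set B \<and> L0 \<in> set A
     \<and> num_zeros V C' = nat (neg_threshold V L v) \<and> neg_threshold V L0 v \<ge> 1"
proof -
  obtain L0 where L0: "L0 \<in> set A" using \<open>A \<noteq> []\<close> by (cases A) auto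
  have g0: "simple_graph_on V (fst L0)" using gA L0 by (cases L0) auto
  have "threshold_local V L0 C v" using sA L0 unfolding successor_def by auto
  hence "card {u \<in> closed_nbhd V (fst L0) v. C u} \<ge> snd L0 v" unfolding threshold_local_def .
  moreover have "card {u \<in> closed_nbhd V (fst L0) v. C u} \<le> card (closed_nbhd V (fst L0) v)"
    by (rule card_mono) (auto simp: closed_nbhd_def fV)
  ultimately have n0: "neg_threshold V L0 v \<ge> 1" using card_cn[OF fV g0 vV]
    unfolding neg_threshold_def by linarith
  obtain L where L: "L \<in> set B" and nl: "\<not> threshold_local V L C v"
    using sB unfolding successor_def by auto
  have g: "simple_graph_on V (fst L)" using gB L by (cases L) auto
  define N where "N = closed_nbhd V (fst L) v"
  have fN: "finite N" unfolding N_def closed_nbhd_def using fV by auto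
  have cN: "card N = degree V (fst L) v + 1" unfolding N_def using card_cn[OF fV g vV] .
  have NV: "N \<subseteq> V" unfolding N_def closed_nbhd_def by auto
  define P where "P = {u \<in> N. C u}"
  define Q where "Q = {u \<in> N. \<not> C u}"
  have cP: "card P < snd L v" using nl unfolding threshold_local_def P_def N_def by auto
  moreover have "card P + card Q = card N"
  proof -
    have "P \<union> Q = N" "P \<inter> Q = {}" unfolding P_def Q_def by auto
    moreover have "finite P" "finite Q" unfolding P_def Q_def using fN by auto
    ultimately show ?thesis using card_Un_disjoint by metis
  qed
  ultimately have "nat (neg_threshold V L v) \<le> card Q" using cN unfolding neg_threshold_def by linarith
  then obtain Z where ZQ: "Z \<subseteq> Q" and cZ: "card Z = nat (neg_threshold V L v)"
    using obtain_subset_with_card_n by metis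
  define C' where "C' = (\<lambda>u. u \<notin> Z)"
  have ZN: "Z \<subseteq> N" using ZQ unfolding Q_def by auto
  have fZ: "finite Z" using finite_subset[OF ZN fN] .
  have ZlN: "card Z \<le> card N" using card_mono[OF fN ZN] .
  have "{u \<in> N. C' u} = N - Z" unfolding C'_def by auto
  hence "card {u \<in> N. C' u} = card N - card Z" using ZN fZ by (simp add: card_Diff_subset)
  hence "card {u \<in> N. C' u} < snd L v" using cN cZ cP ZlN unfolding neg_threshold_def by linarith
  hence nB: "\<not> successor V B C' v" using L unfolding successor_def threshold_local_def N_def by (auto simp: not_le)
  have aA: "successor V A C' v"
    unfolding successor_def threshold_local_def
  proof
    fix M assume M: "M \<in> set A"
    have "snd M v \<le> card {u \<in> closed_nbhd V (fst M) v. C u}"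
      using sA M unfolding successor_def threshold_local_def by auto
    also have "\<dots> \<le> card {u \<in> closed_nbhd V (fst M) v. C' u}"
      using ZQ unfolding Q_def C'_def by (intro card_mono) (auto simp: closed_nbhd_def fV)
    finally show "snd M v \<le> card {u \<in> closed_nbhd V (fst M) v. C' u}" .
  qed
  have "{u \<in> V. \<not> C' u} = Z" using ZN NV unfolding C'_def by auto
  hence "num_zeros V C' = nat (neg_threshold V L v)" unfolding num_zeros_def using cZ by simp
  thus ?thesis using aA nB L L0 n0 by blast
qed

theorem lemma5p3:
  fixes V :: "'a set" and S0 S1 :: "'a layer list"
  assumes "thr_msyds V S0" and "thr_msyds V S1"
  shows "\<not> equivalent V S0 S1 \<longleftrightarrow>
    (\<exists>C. inequivalence_witness V S0 S1 C \<and>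
         int (num_zeros V C) \<le> max_neg_threshold V S0 S1)"
proof
  assume "\<exists>C. inequivalence_witness V S0 S1 C \<and> int (num_zeros V C) \<le> max_neg_threshold V S0 S1"
  thus "\<not> equivalent V S0 S1" unfolding equivalent_def inequivalence_witness_def by blast
next
  assume "\<not> equivalent V S0 S1"
  then obtain C v where vV: "v \<in> V" and d: "successor V S0 C v \<noteq> successor V S1 C v"
    unfolding equivalent_def by blast
  let ?M = "{neg_threshold V L v | L v. L \<in> set S0 \<union> set S1 \<and> v \<in> V}"
  have fV: "finite V" using assms unfolding thr_msyds_def by auto
  have "?M = (\<lambda>(L,v). neg_threshold V L v) ` ((set S0 \<union> set S1) \<times> V)" by auto
  hence fM: "finite ?M" using fV by simp
  have mx: "neg_threshold V L v \<le> max_neg_threshold V S0 S1" if "L \<in> set S0 \<union> set S1" for L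
    unfolding max_neg_threshold_def proof (rule Max_ge[OF fM])
    show "neg_threshold V L v \<in> ?M" using that vV by blast
  qed
  have "\<exists>C' L L0. inequivalence_witness V S0 S1 C' \<and> L \<in> set S0 \<union> set S1 \<and> L0 \<in> set S0 \<union> set S1
     \<and> num_zeros V C' = nat (neg_threshold V L v) \<and> neg_threshold V L0 v \<ge> 1"
  proof (cases "successor V S0 C v")
    case True
    with d have "\<not> successor V S1 C v" by simp
    from key[OF fV _ _ _ vV True this] assms obtain C' L L0 where
      "successor V S0 C' v" "\<not> successor V S1 C' v" "L \<in> set S1" "L0 \<in> set S0"
      "num_zeros V C' = nat (neg_threshold V L v)" "neg_threshold V L0 v \<ge> 1"
      unfolding thr_msyds_def by blast
    thus ?thesis unfolding inequivalence_witness_def using vV by blast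
  next
    case False
    with d have T: "successor V S1 C v" by simp
    from key[OF fV _ _ _ vV T False] assms obtain C' L L0 where
      "successor V S1 C' v" "\<not> successor V S0 C' v" "L \<in> set S0" "L0 \<in> set S1"
      "num_zeros V C' = nat (neg_threshold V L v)" "neg_threshold V L0 v \<ge> 1"
      unfolding thr_msyds_def by blast
    thus ?thesis unfolding inequivalence_witness_def using vV by fastforce
  qed
  then obtain C' L L0 where w: "inequivalence_witness V S0 S1 C'" and L: "L \<in> set S0 \<union> set S1"
    and L0: "L0 \<in> set S0 \<union> set S1" and nz: "num_zeros V C' = nat (neg_threshold V L v)"
    and n0: "neg_threshold V L0 v \<ge> 1" by blast
  have "int (num_zeros V C') \<le> max_neg_threshold V S0 S1"
    using nz mx[OF L] mx[OF L0] n0 by linarith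
  thus "\<exists>C. inequivalence_witness V S0 S1 C \<and> int (num_zeros V C) \<le> max_neg_threshold V S0 S1"
    using w by blast
qed

end
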